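(* Let $\mathcal D$ be a finite family of $\sigma$-structures. Then the family $\mathcal O_{\mathcal D}$ of $\sigma$-forests which do not admit a homomorphism to any structure in $\mathcal D$ is regular.
   Context: Fix a type $\sigma$ (finite set of relation symbols with arities); $\sigma$-structures are finite sets with an $r$-ary relation per symbol of arity $r$; homomorphisms are relation-preserving maps. $\mathrm{Inc}(\mathbf A)$ is the bipartite multigraph with parts $V(\mathbf A)$ and the blocks $(R,(x_1,\dots,x_r))$, $(x_1,\dots,x_r)\in R(\mathbf A)$, with one edge joining $x_i$ to the block for each $i$; $\mathbf A$ is a $\sigma$-forest if $\mathrm{Inc}(\mathbf A)$ has no cycles or parallel edges. $\mathbb F$ is the set of isomorphism classes of $\sigma$-forests, $\mathbb F_{\mathrm r}$ that of rooted $\sigma$-forests. $(\mathbf A,a)+(\mathbf B,b)$: disjoint union with $a,b$ identified as new root; $[(\mathbf A,a)]$ forgets the root. $\mathcal O\subseteq\mathbb F$ is regular if there are only finitely many distinct sets $\mathcal O-(\mathbf A,a)=\{(\mathbf B,b)\in\mathbb F_{\mathrm r}:[(\mathbf A,a)+(\mathbf B,b)]\in\mathcal O\}$, $(\mathbf A,a)\in\mathbb F_{\mathrm r}$. *)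

theory Defs
  imports Main
begin

text \<open>The type sigma: a finite type 'r of relation symbols together with an
arity function ar.\<close>

type_synonym ('r, 'v) struct = "'v set \<times> ('r \<Rightarrow> 'v list set)"

definition verts :: "('r, 'v) struct \<Rightarrow> 'v set" where
  "verts A = fst A"

definition rels :: "('r, 'v) struct \<Rightarrow> 'r \<Rightarrow> 'v list set" where
  "rels A = snd A"

definition wf_struct :: "('r \<Rightarrow> nat) \<Rightarrow> ('r, 'v) struct \<Rightarrow> bool" where
  "wf_struct ar A \<longleftrightarrow> finite (verts A) \<and>
     (\<forall>R. \<forall>t\<in>rels A R. length t = ar R \<and> set t \<subseteq> verts A)"

definition is_hom :: "('r, 'v) struct \<Rightarrow> ('r, 'w) struct \<Rightarrow> ('v \<Rightarrow> 'w) \<Rightarrow> bool" where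
  "is_hom A B h \<longleftrightarrow> h ` verts A \<subseteq> verts B \<and>
     (\<forall>R. \<forall>t\<in>rels A R. map h t \<in> rels B R)"

definition hom_exists :: "('r, 'v) struct \<Rightarrow> ('r, 'w) struct \<Rightarrow> bool" where
  "hom_exists A B \<longleftrightarrow> (\<exists>h. is_hom A B h)"

text \<open>Incidence multigraph Inc(A): nodes Inl x (vertices) and Inr (R,t) (blocks);
for each position i of a tuple t in R there is an edge between t!i and the block.
Adjacency of the underlying simple graph: \<close>
definition inc_adj :: "('r, 'v) struct \<Rightarrow> ('v + ('r \<times> 'v list)) \<Rightarrow> ('v + ('r \<times> 'v list)) \<Rightarrow> bool" where
  "inc_adj A x y \<longleftrightarrow> (\<exists>R t i. t \<in> rels A R \<and> i < length t \<and>
      ((x = Inl (t ! i) \<and> y = Inr (R, t)) \<or> (y = Inl (t ! i) \<and> x = Inr (R, t))))"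

definition inc_has_cycle :: "('r, 'v) struct \<Rightarrow> bool" where
  "inc_has_cycle A \<longleftrightarrow> (\<exists>cs. 3 \<le> length cs \<and> distinct cs \<and>
      (\<forall>i < length cs. inc_adj A (cs ! i) (cs ! ((i + 1) mod length cs))))"

text \<open>Parallel edges in Inc(A) occur exactly when some tuple has a repeated entry.
A sigma-forest: Inc(A) has no cycles and no parallel edges.\<close>
definition is_forest :: "('r \<Rightarrow> nat) \<Rightarrow> ('r, 'v) struct \<Rightarrow> bool" where
  "is_forest ar A \<longleftrightarrow> wf_struct ar A \<and> (\<forall>R. \<forall>t\<in>rels A R. distinct t) \<and> \<not> inc_has_cycle A"

definition rooted_forest :: "('r \<Rightarrow> nat) \<Rightarrow> ('r, 'v) struct \<Rightarrow> 'v \<Rightarrow> bool" where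
  "rooted_forest ar A a \<longleftrightarrow> is_forest ar A \<and> a \<in> verts A"

text \<open>Representatives of forests have vertex type nat. The sum (A,a)+(B,b):
disjoint union (A's vertices x \<mapsto> 2x, B's vertices y \<mapsto> 2y+1) with b identified
with a; the new root is 2a.\<close>
definition glue_map :: "nat \<Rightarrow> nat \<Rightarrow> nat \<Rightarrow> nat" where
  "glue_map a b y = (if y = b then 2 * a else 2 * y + 1)"

definition rsum :: "('r, nat) struct \<Rightarrow> nat \<Rightarrow> ('r, nat) struct \<Rightarrow> nat \<Rightarrow> ('r, nat) struct" where
  "rsum A a B b =
     ((\<lambda>x. 2 * x) ` verts A \<union> glue_map a b ` verts B,
      \<lambda>R. map (\<lambda>x. 2 * x) ` rels A R \<union> map (glue_map a b) ` rels B R)"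

definition rsum_root :: "nat \<Rightarrow> nat" where
  "rsum_root a = 2 * a"

text \<open>The residual O - (A,a) (on representatives; O is meant to be
isomorphism-invariant).\<close>
definition residual ::
  "('r \<Rightarrow> nat) \<Rightarrow> ('r, nat) struct set \<Rightarrow> ('r, nat) struct \<Rightarrow> nat \<Rightarrow> (('r, nat) struct \<times> nat) set" where
  "residual ar Ob A a = {(B, b). rooted_forest ar B b \<and> rsum A a B b \<in> Ob}"

definition regular :: "('r \<Rightarrow> nat) \<Rightarrow> ('r, nat) struct set \<Rightarrow> bool" where
  "regular ar Ob \<longleftrightarrow> finite {residual ar Ob A a | A a. rooted_forest ar A a}"

definition forbidden_family :: "('r \<Rightarrow> nat) \<Rightarrow> ('r, 'w) struct set \<Rightarrow> ('r, nat) struct set" where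
  "forbidden_family ar D = {F. is_forest ar F \<and> (\<forall>B\<in>D. \<not> hom_exists F B)}"

end

theory Submission
  imports Defs
begin


lemma inc_adj_cases:
  "inc_adj G x y \<Longrightarrow> \<exists>v R t. t \<in> rels G R \<and> v \<in> set t \<and>
     ((x = Inl v \<and> y = Inr (R,t)) \<or> (x = Inr (R,t) \<and> y = Inl v))"
  unfolding inc_adj_def by (metis nth_mem)

lemma inc_adj_intro:
  assumes "t \<in> rels G R" "v \<in> set t"
  shows "inc_adj G (Inl v) (Inr (R,t))" "inc_adj G (Inr (R,t)) (Inl v)"
proof -
  obtain i where "i < length t" "t ! i = v" using assms(2) by (meson in_set_conv_nth)
  then show "inc_adj G (Inl v) (Inr (R,t))" "inc_adj G (Inr (R,t)) (Inl v)"
    using assms(1) unfolding inc_adj_def by blast+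
qed

definition P2 :: "('v + ('r \<times> 'v list)) \<Rightarrow> bool" where
  "P2 x = (case x of Inl _ \<Rightarrow> True | Inr (R,t) \<Rightarrow> (\<exists>p\<in>set t. \<exists>q\<in>set t. p \<noteq> q))"

lemma mod_prev: "i < (n::nat) \<Longrightarrow> 0 < n \<Longrightarrow> ((i + n - 1) mod n + 1) mod n = i"
proof -
  assume a: "i < n" "0 < n"
  show ?thesis
  proof (cases i)
    case 0 then show ?thesis using a by (simp add: mod_Suc_eq)
  next
    case (Suc k) then show ?thesis using a by simp
  qed
qed

lemma mod_shift_ne: "j < (n::nat) \<Longrightarrow> 0 < k \<Longrightarrow> k < n \<Longrightarrow> (j + k) mod n \<noteq> j"
proof
  assume a: "j < n" "0 < k" "k < n" "(j + k) mod n = j"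
  show False
  proof (cases "j + k < n")
    case True then show False using a by simp
  next
    case False
    then have "(j + k) mod n = (j + k - n) mod n" by (simp add: le_mod_geq)
    also have "\<dots> = j + k - n" using a by simp
    finally show False using a False by linarith
  qed
qed

lemma cycle_P2:
  assumes d: "distinct cs" and l: "3 \<le> length cs"
    and adj: "\<forall>i<length cs. inc_adj G (cs ! i) (cs ! ((i + 1) mod length cs))"
  shows "\<forall>x\<in>set cs. P2 x"
proof
  fix x assume "x \<in> set cs"
  then obtain i where i: "i < length cs" "cs ! i = x" by (meson in_set_conv_nth)
  let ?n = "length cs"
  show "P2 x"
  proof (cases x)
    case (Inl v) then show ?thesis by (simp add: P2_def)
  next
    case (Inr p)
    then obtain R t where x: "x = Inr (R,t)" by (cases p) auto
    define k1 where "k1 = (i + 1) mod ?n"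
    define k2 where "k2 = (i + ?n - 1) mod ?n"
    have k1: "k1 < ?n" and k2: "k2 < ?n" using l by (auto simp: k1_def k2_def intro!: mod_less_divisor)
    have n0: "0 < ?n" using l by linarith
    have "(k2 + 1) mod ?n = i" using mod_prev[OF i(1) n0] unfolding k2_def .
    then have a2: "inc_adj G (cs ! k2) x" using adj k2 i by metis
    have a1: "inc_adj G x (cs ! k1)" using adj i unfolding k1_def by auto
    have "k1 \<noteq> k2"
    proof
      assume "k1 = k2"
      then have "(k1 + 1) mod ?n = i" using \<open>(k2 + 1) mod ?n = i\<close> by simp
      then have "(i + 2) mod ?n = i" unfolding k1_def by (simp add: mod_Suc_eq)
      then show False using mod_shift_ne[of i ?n 2] i l by simp
    qed
    then have ne: "cs ! k1 \<noteq> cs ! k2" using d k1 k2 by (simp add: nth_eq_iff_index_eq)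
    from inc_adj_cases[OF a1] x obtain p where p: "p \<in> set t" "cs ! k1 = Inl p" by auto
    from inc_adj_cases[OF a2] x obtain q where q: "q \<in> set t" "cs ! k2 = Inl q" by auto
    show ?thesis using p q ne x by (auto simp: P2_def)
  qed
qed

fun emb :: "('v \<Rightarrow> 'u) \<Rightarrow> 'v + ('r \<times> 'v list) \<Rightarrow> 'u + ('r \<times> 'u list)" where
  "emb f (Inl x) = Inl (f x)"
| "emb f (Inr (R,s)) = Inr (R, map f s)"

lemma inj_emb: assumes "inj f" shows "inj (emb f)"
proof (rule injI)
  fix x y assume "emb f x = emb f y"
  then show "x = y" using assms
    by (cases x; cases y; auto simp: inj_eq inj_map_eq_map)
qed

lemma pullback:
  assumes d: "distinct cs" and l: "3 \<le> length cs"
    and adj: "\<forall>i<length cs. inc_adj G (cs ! i) (cs ! ((i + 1) mod length cs))"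
    and inj: "inj psi" and rng: "set cs \<subseteq> range psi"
    and rfl: "\<And>u v. inc_adj G (psi u) (psi v) \<Longrightarrow> P2 (psi u) \<Longrightarrow> P2 (psi v) \<Longrightarrow> inc_adj H u v"
  shows "inc_has_cycle H"
proof -
  have P: "\<forall>x\<in>set cs. P2 x" using cycle_P2[OF d l adj] .
  define cs2 where "cs2 = map (inv psi) cs"
  have bk: "\<And>x. x \<in> set cs \<Longrightarrow> psi (inv psi x) = x" using rng by (meson f_inv_into_f subsetD)
  have "distinct cs2" unfolding cs2_def using d inj_on_inv_into[OF rng]
    by (simp add: distinct_map)
  moreover have "3 \<le> length cs2" using l by (simp add: cs2_def)
  moreover have "\<forall>i<length cs2. inc_adj H (cs2 ! i) (cs2 ! ((i + 1) mod length cs2))"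
  proof (intro allI impI)
    fix i assume i: "i < length cs2"
    let ?j = "(i + 1) mod length cs"
    have i': "i < length cs" using i by (simp add: cs2_def)
    have j: "?j < length cs" using l by (intro mod_less_divisor) linarith
    have m1: "cs ! i \<in> set cs" "cs ! ?j \<in> set cs" using i' j by auto
    have "inc_adj G (psi (inv psi (cs ! i))) (psi (inv psi (cs ! ?j)))"
      using adj i' bk m1 by simp
    moreover have "P2 (psi (inv psi (cs ! i)))" "P2 (psi (inv psi (cs ! ?j)))"
      using P bk m1 by auto
    ultimately have "inc_adj H (inv psi (cs ! i)) (inv psi (cs ! ?j))" using rfl by blast
    then show "inc_adj H (cs2 ! i) (cs2 ! ((i + 1) mod length cs2))"
      using i' j by (simp add: cs2_def)
  qed
  ultimately show ?thesis unfolding inc_has_cycle_def by blast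
qed

lemma reflect:
  assumes rel: "\<And>R. rels G R = map f ` rels X R \<union> map g ` rels Y R"
    and inj: "inj f"
    and ov: "\<And>s s'. map f s = map g s' \<Longrightarrow> \<forall>p\<in>set (map f s). \<forall>q\<in>set (map f s). p = q"
    and a: "inc_adj G (emb f u) (emb f v)" and pu: "P2 (emb f u)" and pv: "P2 (emb f v)"
  shows "inc_adj X u v"
proof -
  have key: "s \<in> rels X R \<and> y \<in> set s"
    if h: "map f s \<in> rels G R" "f y \<in> set (map f s)" "P2 (Inr (R, map f s))" for s y R
  proof -
    obtain p q where pq: "p \<in> set (map f s)" "q \<in> set (map f s)" "p \<noteq> q"
      using h(3) by (auto simp: P2_def)
    have "map f s \<in> map f ` rels X R"
    proof (rule ccontr)
      assume "map f s \<notin> map f ` rels X R"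
      then obtain s' where "map f s = map g s'" using h(1) rel by auto
      then show False using ov pq by blast
    qed
    then have "s \<in> rels X R" using inj by (auto simp: inj_map_eq_map)
    moreover have "y \<in> set s" using h(2) inj by (auto simp: inj_eq)
    ultimately show ?thesis by blast
  qed
  from inc_adj_cases[OF a] obtain w R t where w: "t \<in> rels G R" "w \<in> set t"
    "(emb f u = Inl w \<and> emb f v = Inr (R,t)) \<or> (emb f u = Inr (R,t) \<and> emb f v = Inl w)" by blast
  show ?thesis
  proof (cases u)
    case (Inl y)
    then obtain R' s where v: "v = Inr (R', s)" using w(3) by (cases v) auto
    have "s \<in> rels X R' \<and> y \<in> set s" using key[of s R' y] w Inl v pv by auto
    then show ?thesis using inc_adj_intro(1) Inl v by metis
  next
    case (Inr p)
    then obtain R' s where u: "u = Inr (R', s)" by (cases p) auto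
    then obtain y where v: "v = Inl y" using w(3) by (cases v) auto
    have "s \<in> rels X R' \<and> y \<in> set s" using key[of s R' y] w u v pu by auto
    then show ?thesis using inc_adj_intro(2) u v by metis
  qed
qed



lemma glue_inj: "inj (glue_map a b)"
  by (rule injI) (auto simp: glue_map_def split: if_splits; presburger)

lemma rels_rsum: "rels (rsum A a B b) R = map (\<lambda>x. 2 * x) ` rels A R \<union> map (glue_map a b) ` rels B R"
  by (simp add: rsum_def rels_def)

lemma verts_rsum: "verts (rsum A a B b) = (\<lambda>x. 2 * x) ` verts A \<union> glue_map a b ` verts B"
  by (simp add: rsum_def verts_def)

lemma overlap: "map (\<lambda>x. 2 * x) s = map (glue_map a b) s' \<Longrightarrow> \<forall>z\<in>set (map (glue_map a b) s'). z = 2 * a"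
proof
  fix z assume e: "map (\<lambda>x. 2 * x) s = map (glue_map a b) s'" and z: "z \<in> set (map (glue_map a b) s')"
  then have "even z" by (metis (no_types, lifting) dvd_triv_left ex_map_conv imageE list.set_map)
  from z obtain y where "z = glue_map a b y" by auto
  with \<open>even z\<close> show "z = 2 * a" by (auto simp: glue_map_def split: if_splits)
qed

lemma overlapA: "map (\<lambda>x::nat. 2 * x) s = map (glue_map a b) s' \<Longrightarrow> \<forall>p\<in>set (map (\<lambda>x. 2 * x) s). \<forall>q\<in>set (map (\<lambda>x. 2 * x) s). p = q"
proof -
  assume e: "map (\<lambda>x::nat. 2 * x) s = map (glue_map a b) s'"
  from overlap[OF e] show ?thesis unfolding e by simp
qed

definition col :: "nat + ('r \<times> nat list) \<Rightarrow> bool" where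
  "col x = (case x of Inl v \<Rightarrow> odd v | Inr (R,t) \<Rightarrow> (\<exists>z\<in>set t. odd z))"

lemma adj_col:
  assumes "inc_adj (rsum A a B b) u v" "u \<noteq> Inl (2 * a)" "v \<noteq> Inl (2 * a)"
  shows "col u = col v"
proof -
  from inc_adj_cases[OF assms(1)] obtain x R t where w: "t \<in> rels (rsum A a B b) R" "x \<in> set t"
    "(u = Inl x \<and> v = Inr (R,t)) \<or> (u = Inr (R,t) \<and> v = Inl x)" by blast
  have x: "x \<noteq> 2 * a" using w(3) assms by auto
  have "odd x = (\<exists>z\<in>set t. odd z)"
  proof (cases "t \<in> map (\<lambda>x. 2 * x) ` rels A R")
    case True then show ?thesis using w(2) by auto
  next
    case False
    then have "t \<in> map (glue_map a b) ` rels B R" using w(1) unfolding rels_rsum by simp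
    then obtain s where s: "t = map (glue_map a b) s" by auto
    then obtain y where "x = glue_map a b y" using w(2) by auto
    then have "odd x" using x by (auto simp: glue_map_def split: if_splits)
    then show ?thesis using w(2) by auto
  qed
  then show ?thesis using w(3) by (auto simp: col_def)
qed

lemma rsum_no_cycle:
  assumes A: "\<not> inc_has_cycle A" and B: "\<not> inc_has_cycle B"
  shows "\<not> inc_has_cycle (rsum A a B b)"
proof
  let ?G = "rsum A a B b"
  let ?fA = "\<lambda>x::nat. 2 * x"
  let ?fB = "glue_map a b"
  assume "inc_has_cycle ?G"
  then obtain cs where l: "3 \<le> length cs" and d: "distinct cs"
    and adj: "\<forall>i<length cs. inc_adj ?G (cs ! i) (cs ! ((i + 1) mod length cs))"
    unfolding inc_has_cycle_def by blast
  let ?n = "length cs"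
  have n0: "0 < ?n" using l by linarith
  obtain j where j: "j < ?n" "\<forall>q<?n. cs ! q = Inl (2 * a) \<longrightarrow> q = j"
  proof (cases "Inl (2 * a) \<in> set cs")
    case True
    then obtain j where "j < ?n" "cs ! j = Inl (2 * a)" by (meson in_set_conv_nth)
    then show ?thesis using that d by (metis nth_eq_iff_index_eq)
  next
    case False then show ?thesis using that n0 by (metis nth_mem)
  qed
  define c where "c = col (cs ! ((j + 1) mod ?n))"
  have nj: "cs ! q \<noteq> Inl (2 * a)" if "q < ?n" "q \<noteq> j" for q using j that by blast
  have claim1: "col (cs ! ((j + 1 + m) mod ?n)) = c" if "m < ?n - 1" for m
    using that
  proof (induction m)
    case 0 then show ?case by (simp add: c_def)
  next
    case (Suc m)
    let ?q = "(j + 1 + m) mod ?n"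
    have q: "?q < ?n" using n0 by simp
    have "?q \<noteq> j" using mod_shift_ne[of j ?n "m+1"] j Suc.prems by (simp add: add.assoc)
    moreover have "(j + 1 + Suc m) mod ?n \<noteq> j"
      using mod_shift_ne[of j ?n "m+2"] j Suc.prems by (simp add: add.assoc)
    moreover have "(?q + 1) mod ?n = (j + 1 + Suc m) mod ?n" by (simp add: mod_Suc_eq)
    ultimately have "col (cs ! ?q) = col (cs ! ((j + 1 + Suc m) mod ?n))"
      using adj_col adj q nj n0 by (metis mod_less_divisor)
    then show ?case using Suc by simp
  qed
  have claim2: "col (cs ! q) = c" if q: "q < ?n" "cs ! q \<noteq> Inl (2 * a)" for q
  proof (cases "q = j")
    case True
    have "(j + 1) mod ?n \<noteq> j" using mod_shift_ne[of j ?n 1] j l by simp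
    then have "cs ! ((j + 1) mod ?n) \<noteq> Inl (2 * a)" using nj n0 by simp
    then show ?thesis using adj_col adj q True c_def by blast
  next
    case False
    show ?thesis
    proof (cases "j < q")
      case True
      have "(j + 1 + (q - j - 1)) mod ?n = q" using True q by simp
      then show ?thesis using claim1[of "q - j - 1"] True q by simp
    next
      case F2: False
      then have e: "j + 1 + (q + ?n - j - 1) = q + ?n" using False q j by simp
      have "(j + 1 + (q + ?n - j - 1)) mod ?n = q" unfolding e using q by simp
      then show ?thesis using claim1[of "q + ?n - j - 1"] False F2 q j by simp
    qed
  qed
  have colset: "\<forall>x\<in>set cs. x \<noteq> Inl (2 * a) \<longrightarrow> col x = c"
    using claim2 by (metis in_set_conv_nth)
  have blockrel: "t \<in> rels ?G R" if mem: "Inr (R,t) \<in> set cs" for R t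
  proof -
    obtain i where i: "i < ?n" "cs ! i = Inr (R,t)" using mem by (meson in_set_conv_nth)
    then have "inc_adj ?G (Inr (R,t)) (cs ! ((i + 1) mod ?n))" using adj by metis
    from inc_adj_cases[OF this] show ?thesis by auto
  qed
  have vertrel: "\<exists>R t. t \<in> rels ?G R \<and> x \<in> set t" if mem: "Inl x \<in> set cs" for x
  proof -
    obtain i where i: "i < ?n" "cs ! i = Inl x" using mem by (meson in_set_conv_nth)
    then have "inc_adj ?G (Inl x) (cs ! ((i + 1) mod ?n))" using adj by metis
    from inc_adj_cases[OF this] show ?thesis by auto
  qed
  show False
  proof (cases c)
    case False
    have rng: "set cs \<subseteq> range (emb ?fA)"
    proof
      fix x assume x: "x \<in> set cs"
      show "x \<in> range (emb ?fA)"
      proof (cases x)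
        case (Inl v)
        show ?thesis
        proof (cases "v = 2 * a")
          case True then show ?thesis using Inl by (metis emb.simps(1) rangeI)
        next
          case F: False
          then have "even v" using colset x Inl False by (auto simp: col_def)
          then have "x = emb ?fA (Inl (v div 2))" using Inl by simp
          then show ?thesis by blast
        qed
      next
        case (Inr p)
        then obtain R t where xt: "x = Inr (R,t)" by (cases p) auto
        then have "\<forall>z\<in>set t. even z" using colset x False by (auto simp: col_def)
        then have "t = map ?fA (map (\<lambda>z. z div 2) t)" by (simp add: map_idI)
        then have "x = emb ?fA (Inr (R, map (\<lambda>z. z div 2) t))" using xt by simp
        then show ?thesis by blast
      qed
    qed
    have injA: "inj ?fA" by (rule injI) simp
    have "inc_has_cycle A"
    proof (rule pullback[OF d l adj inj_emb[OF injA] rng])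
      fix u v assume h: "inc_adj ?G (emb ?fA u) (emb ?fA v)" "P2 (emb ?fA u)" "P2 (emb ?fA v)"
      show "inc_adj A u v"
        apply (rule reflect[OF rels_rsum[of A a B b] injA])
           apply (erule overlapA)
        using h by auto
    qed
    then show False using A by simp
  next
    case True
    have rng: "set cs \<subseteq> range (emb ?fB)"
    proof
      fix x assume x: "x \<in> set cs"
      show "x \<in> range (emb ?fB)"
      proof (cases x)
        case (Inl v)
        show ?thesis
        proof (cases "v = 2 * a")
          case True
          then have "x = emb ?fB (Inl b)" using Inl by (simp add: glue_map_def)
          then show ?thesis by blast
        next
          case F: False
          then have "odd v" using colset x Inl True by (auto simp: col_def)
          obtain R t where t: "t \<in> rels ?G R" "v \<in> set t" using vertrel x Inl by blast
          have "t \<notin> map ?fA ` rels A R" using t(2) \<open>odd v\<close> by auto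
          then have "t \<in> map ?fB ` rels B R" using t(1) unfolding rels_rsum by simp
          then obtain s where "t = map ?fB s" by auto
          then obtain y where "v = ?fB y" using t(2) by auto
          then have "x = emb ?fB (Inl y)" using Inl by simp
          then show ?thesis by blast
        qed
      next
        case (Inr p)
        then obtain R t where xt: "x = Inr (R,t)" by (cases p) auto
        then have "\<exists>z\<in>set t. odd z" using colset x True by (auto simp: col_def)
        then have "t \<notin> map ?fA ` rels A R" by auto
        then have "t \<in> map ?fB ` rels B R" using blockrel[of R t] x xt unfolding rels_rsum by simp
        then obtain s where "t = map ?fB s" by auto
        then have "x = emb ?fB (Inr (R, s))" using xt by simp
        then show ?thesis by blast
      qed
    qed
    have rels': "\<And>R. rels ?G R = map ?fB ` rels B R \<union> map ?fA ` rels A R"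
      unfolding rels_rsum by (rule sup_commute)
    have ov': "\<forall>p\<in>set (map ?fB s). \<forall>q\<in>set (map ?fB s). p = q"
      if "map ?fB s = map ?fA s'" for s s'
      using overlap[of s' a b s, OF that[symmetric]] by (intro ballI) metis
    have "inc_has_cycle B"
    proof (rule pullback[OF d l adj inj_emb[OF glue_inj] rng])
      fix u v assume h: "inc_adj ?G (emb ?fB u) (emb ?fB v)" "P2 (emb ?fB u)" "P2 (emb ?fB v)"
      show "inc_adj B u v"
        apply (rule reflect[OF rels' glue_inj])
           apply (erule ov')
        using h by auto
    qed
    then show False using B by simp
  qed
qed



lemma rsum_forest:
  assumes A: "is_forest ar A" and B: "is_forest ar B"
  shows "is_forest ar (rsum A a B b)"
proof -
  let ?G = "rsum A a B b"
  have injA: "inj (\<lambda>x::nat. 2 * x)" by (rule injI) simp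
  have wA: "wf_struct ar A" and wB: "wf_struct ar B" using A B by (auto simp: is_forest_def)
  have "finite (verts ?G)" using wA wB by (simp add: verts_rsum wf_struct_def)
  moreover have "\<forall>R. \<forall>t\<in>rels ?G R. length t = ar R \<and> set t \<subseteq> verts ?G"
    using wA wB unfolding rels_rsum verts_rsum wf_struct_def by fastforce
  ultimately have "wf_struct ar ?G" by (simp add: wf_struct_def)
  moreover have "\<forall>R. \<forall>t\<in>rels ?G R. distinct t"
    using A B injA glue_inj unfolding rels_rsum is_forest_def
    by (auto simp: distinct_map inj_on_subset[OF _ subset_UNIV])
  moreover have "\<not> inc_has_cycle ?G" using rsum_no_cycle[of A B a b] A B by (simp add: is_forest_def)
  ultimately show ?thesis by (simp add: is_forest_def)
qed

lemma hom_rsum: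
  "hom_exists (rsum A a B b) C \<longleftrightarrow> (\<exists>hA hB. is_hom A C hA \<and> is_hom B C hB \<and> hA a = hB b)"
proof
  assume "hom_exists (rsum A a B b) C"
  then obtain h where h: "is_hom (rsum A a B b) C h" by (auto simp: hom_exists_def)
  have hv: "h ` ((\<lambda>x. 2 * x) ` verts A \<union> glue_map a b ` verts B) \<subseteq> verts C"
    and hr: "\<And>R t. t \<in> map (\<lambda>x. 2 * x) ` rels A R \<union> map (glue_map a b) ` rels B R \<Longrightarrow> map h t \<in> rels C R"
  proof -
    have hh: "h ` ((\<lambda>x. 2 * x) ` verts A \<union> glue_map a b ` verts B) \<subseteq> verts C \<and>
      (\<forall>R. \<forall>t \<in> map (\<lambda>x. 2 * x) ` rels A R \<union> map (glue_map a b) ` rels B R. map h t \<in> rels C R)"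
      using h unfolding is_hom_def verts_rsum rels_rsum .
    show "h ` ((\<lambda>x. 2 * x) ` verts A \<union> glue_map a b ` verts B) \<subseteq> verts C" using hh by (rule conjunct1)
    show "map h t \<in> rels C R" if "t \<in> map (\<lambda>x. 2 * x) ` rels A R \<union> map (glue_map a b) ` rels B R" for R t
      using conjunct2[OF hh, THEN spec[of _ R]] that by (rule bspec)
  qed
  have "is_hom A C (h \<circ> (\<lambda>x. 2 * x))"
    unfolding is_hom_def
  proof (intro conjI allI ballI)
    show "(h \<circ> (\<lambda>x. 2 * x)) ` verts A \<subseteq> verts C" using hv by (auto simp: image_comp[symmetric])
  next
    fix R s assume "s \<in> rels A R"
    then have "map h (map (\<lambda>x. 2 * x) s) \<in> rels C R" using hr by blast
    then show "map (h \<circ> (\<lambda>x. 2 * x)) s \<in> rels C R" by simp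
  qed
  moreover have "is_hom B C (h \<circ> glue_map a b)"
    unfolding is_hom_def
  proof (intro conjI allI ballI)
    show "(h \<circ> glue_map a b) ` verts B \<subseteq> verts C" using hv by (auto simp: image_comp[symmetric])
  next
    fix R s assume "s \<in> rels B R"
    then have "map h (map (glue_map a b) s) \<in> rels C R" using hr by blast
    then show "map (h \<circ> glue_map a b) s \<in> rels C R" by simp
  qed
  moreover have "(h \<circ> (\<lambda>x. 2 * x)) a = (h \<circ> glue_map a b) b" by (simp add: glue_map_def)
  ultimately show "\<exists>hA hB. is_hom A C hA \<and> is_hom B C hB \<and> hA a = hB b" by blast
next
  assume "\<exists>hA hB. is_hom A C hA \<and> is_hom B C hB \<and> hA a = hB b"
  then obtain hA hB where hA: "is_hom A C hA" and hB: "is_hom B C hB" and e: "hA a = hB b" by blast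
  define h where "h x = (if even x then hA (x div 2) else hB (x div 2))" for x
  have h1: "h \<circ> (\<lambda>x. 2 * x) = hA" by (auto simp: h_def)
  have h2: "h \<circ> glue_map a b = hB" using e by (auto simp: h_def glue_map_def fun_eq_iff)
  have "h ` verts (rsum A a B b) \<subseteq> verts C"
    unfolding verts_rsum image_Un image_comp h1 h2 using hA hB by (simp add: is_hom_def)
  moreover have "\<forall>R. \<forall>t\<in>rels (rsum A a B b) R. map h t \<in> rels C R"
  proof (intro allI ballI)
    fix R t assume "t \<in> rels (rsum A a B b) R"
    then consider s where "s \<in> rels A R" "t = map (\<lambda>x. 2 * x) s"
      | s where "s \<in> rels B R" "t = map (glue_map a b) s"
      unfolding rels_rsum by blast
    then show "map h t \<in> rels C R"
    proof cases
      case 1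
      then have "map h t = map (h \<circ> (\<lambda>x. 2 * x)) s" by simp
      then have eq: "map h t = map hA s" unfolding h1 .
      have "map hA s \<in> rels C R" using hA 1(1) unfolding is_hom_def by blast
      then show ?thesis unfolding eq .
    next
      case 2
      then have "map h t = map (h \<circ> glue_map a b) s" by simp
      then have eq: "map h t = map hB s" unfolding h2 .
      have "map hB s \<in> rels C R" using hB 2(1) unfolding is_hom_def by blast
      then show ?thesis unfolding eq .
    qed
  qed
  ultimately have "is_hom (rsum A a B b) C h" by (simp add: is_hom_def)
  then show "hom_exists (rsum A a B b) C" by (auto simp: hom_exists_def)
qed

lemma finite_image_factor:
  assumes "finite (k ` S)" and "\<And>x y. x \<in> S \<Longrightarrow> y \<in> S \<Longrightarrow> k x = k y \<Longrightarrow> r x = r y"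
  shows "finite (r ` S)"
proof -
  have "r ` S = (\<lambda>v. r (inv_into S k v)) ` (k ` S)"
  proof (intro equalityI subsetI)
    fix z assume "z \<in> r ` S"
    then obtain x where x: "x \<in> S" "z = r x" by auto
    have "inv_into S k (k x) \<in> S" "k (inv_into S k (k x)) = k x"
      using x by (auto intro: inv_into_into f_inv_into_f)
    then have "r (inv_into S k (k x)) = z" using assms(2) x by metis
    then show "z \<in> (\<lambda>v. r (inv_into S k v)) ` (k ` S)" using x by blast
  next
    fix z assume "z \<in> (\<lambda>v. r (inv_into S k v)) ` (k ` S)"
    then obtain x where x: "x \<in> S" "z = r (inv_into S k (k x))" by auto
    then show "z \<in> r ` S" by (auto intro: inv_into_into)
  qed
  then show ?thesis using assms(1) by simp
qed

theorem corollary3p4: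
  fixes ar :: "'r::finite \<Rightarrow> nat" and D :: "('r, 'w) struct set"
  assumes "finite D" and "\<forall>B\<in>D. wf_struct ar B"
  shows "regular ar (forbidden_family ar D)"
proof -
  let ?O = "forbidden_family ar D"
  define S where "S = {(A :: ('r, nat) struct, a :: nat). rooted_forest ar A a}"
  define k where "k = (\<lambda>(A :: ('r, nat) struct, a :: nat) C. if C \<in> D then {h a | h. is_hom A C h} else ({} :: 'w set))"
  define r where "r = (\<lambda>(A, a). residual ar ?O A a)"
  have eq: "{residual ar ?O A a | A a. rooted_forest ar A a} = r ` S"
    unfolding S_def r_def by auto
  have "k ` S \<subseteq> {f. \<forall>C. (C \<in> D \<longrightarrow> f C \<in> Pow (\<Union>C\<in>D. verts C)) \<and> (C \<notin> D \<longrightarrow> f C = {})}"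
  proof (intro subsetI CollectI allI conjI impI)
    fix f C assume f: "f \<in> k ` S"
    then obtain A a where Aa: "(A, a) \<in> S" "f = k (A, a)" by auto
    have "a \<in> verts A" using Aa by (simp add: S_def rooted_forest_def)
    {
      assume "C \<in> D"
      then show "f C \<in> Pow (\<Union>C\<in>D. verts C)"
        using Aa \<open>a \<in> verts A\<close> by (auto simp: k_def is_hom_def)
    }
    {
      assume "C \<notin> D" then show "f C = {}" using Aa by (simp add: k_def)
    }
  qed
  moreover have "finite {f. \<forall>C. (C \<in> D \<longrightarrow> f C \<in> Pow (\<Union>C\<in>D. verts C)) \<and> (C \<notin> D \<longrightarrow> f C = {})}"
    using assms by (intro finite_set_of_finite_funs) (auto simp: wf_struct_def)
  ultimately have fk: "finite (k ` S)" by (rule finite_subset)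
  have "finite (r ` S)"
  proof (rule finite_image_factor[OF fk])
    fix x y assume x: "x \<in> S" and y: "y \<in> S" and kxy: "k x = k y"
    obtain A a where xa: "x = (A, a)" by (cases x)
    obtain A' a' where ya: "y = (A', a')" by (cases y)
    have fA: "is_forest ar A" "is_forest ar A'" using x y xa ya by (auto simp: S_def rooted_forest_def)
    have kC: "{h a | h. is_hom A C h} = {h a' | h. is_hom A' C h}" if "C \<in> D" for C
      using fun_cong[OF kxy, of C] that xa ya by (simp add: k_def)
    have mem: "rsum A a B b \<in> ?O \<longleftrightarrow> rsum A' a' B b \<in> ?O" if "rooted_forest ar B b" for B b
    proof -
      have fB: "is_forest ar B" using that by (simp add: rooted_forest_def)
      have "hom_exists (rsum A a B b) C \<longleftrightarrow> hom_exists (rsum A' a' B b) C" if "C \<in> D" for C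
      proof -
        have "hom_exists (rsum A a B b) C \<longleftrightarrow> (\<exists>v \<in> {h a | h. is_hom A C h}. \<exists>hB. is_hom B C hB \<and> v = hB b)"
          unfolding hom_rsum by blast
        also have "\<dots> \<longleftrightarrow> (\<exists>v \<in> {h a' | h. is_hom A' C h}. \<exists>hB. is_hom B C hB \<and> v = hB b)"
          using kC[OF that] by simp
        also have "\<dots> \<longleftrightarrow> hom_exists (rsum A' a' B b) C"
          unfolding hom_rsum by blast
        finally show ?thesis .
      qed
      then show ?thesis using rsum_forest[OF fA(1) fB] rsum_forest[OF fA(2) fB]
        by (auto simp: forbidden_family_def)
    qed
    show "r x = r y" unfolding r_def xa ya residual_def using mem by auto
  qed
  then show ?thesis unfolding regular_def eq .
qed


end
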